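(* Let $\mathbb{F}$ be a field, $H$ a finite additive subgroup of $\mathbb{F}$, and $m,d$ positive integers with $d<|H|$. For every $\vec v\in\mathbb{F}^m$ and every polynomial $P\in\mathbb{F}[X_1,\dots,X_m]$ of individual degree at most $d$, $$\sum_{\vec\alpha\in H^m}P(\vec\alpha+\vec v)=\kappa\cdot a_0^m,$$ where $\kappa$ is the coefficient of $X_1^{|H|-1}\cdots X_m^{|H|-1}$ in $P$ and $a_0$ is the coefficient of the linear term $X$ in the polynomial $\prod_{h\in H}(X-h)$. In particular, if $P$ has total degree strictly less than $m(|H|-1)$, the sum equals $0$. *)

theory Defs
  imports "HOL-Computational_Algebra.Polynomial" "HOL-Library.FuncSet"
begin

text \<open>A polynomial in m variables X_0..X_(m-1) over a field is represented by its
coefficient function c on exponent vectors (nat => nat); only exponent vectors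
supported on {..<m} occur.\<close>

definition exps :: "nat \<Rightarrow> nat \<Rightarrow> (nat \<Rightarrow> nat) set" where
  "exps m d = {e. (\<forall>i<m. e i \<le> d) \<and> (\<forall>i. m \<le> i \<longrightarrow> e i = 0)}"

definition indiv_deg_le :: "nat \<Rightarrow> nat \<Rightarrow> ((nat \<Rightarrow> nat) \<Rightarrow> 'a::zero) \<Rightarrow> bool" where
  "indiv_deg_le m d c \<longleftrightarrow> (\<forall>e. c e \<noteq> 0 \<longrightarrow> e \<in> exps m d)"

definition mpoly_eval :: "nat \<Rightarrow> nat \<Rightarrow> ((nat \<Rightarrow> nat) \<Rightarrow> 'a::field) \<Rightarrow> (nat \<Rightarrow> 'a) \<Rightarrow> 'a" where
  "mpoly_eval m d c x = (\<Sum>e\<in>exps m d. c e * (\<Prod>i<m. x i ^ e i))"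

definition additive_subgroup :: "'a::ab_group_add set \<Rightarrow> bool" where
  "additive_subgroup H \<longleftrightarrow> 0 \<in> H \<and> (\<forall>x\<in>H. \<forall>y\<in>H. x + y \<in> H) \<and> (\<forall>x\<in>H. - x \<in> H)"

end

theory Submission
  imports Defs
begin

lemma Msub:
  fixes H :: "'a::field set"
  assumes fin: "finite H" and sg: "additive_subgroup H" and hH: "h \<in> H"
  shows "(\<Prod>h'\<in>H-{h}. h - h') = (\<Prod>g\<in>H-{0}. g)"
proof -
  have bij: "bij_betw (\<lambda>h'. h - h') (H-{h}) (H-{0})"
  proof (rule bij_betwI[where g="\<lambda>g. h - g"])
    show "(\<lambda>h'. h - h') \<in> H - {h} \<rightarrow> H - {0}"
    proof
      fix x assume x: "x \<in> H - {h}"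
      have "h + - x \<in> H" using sg hH x unfolding additive_subgroup_def by blast
      thus "h - x \<in> H - {0}" using x by auto
    qed
    show "(\<lambda>g. h - g) \<in> H - {0} \<rightarrow> H - {h}"
    proof
      fix x assume x: "x \<in> H - {0}"
      have "h + - x \<in> H" using sg hH x unfolding additive_subgroup_def by blast
      thus "h - x \<in> H - {h}" using x by simp
    qed
  qed auto
  show ?thesis using prod.reindex_bij_betw[OF bij, of "\<lambda>g. g"] by simp
qed

lemma coeffL1:
  fixes H :: "'a::field set"
  assumes fin: "finite H" and sg: "additive_subgroup H"
  shows "coeff (\<Prod>h\<in>H. [:- h, 1:]) 1 = (\<Prod>g\<in>H-{0}. g)"
proof -
  have z: "0 \<in> H" using sg unfolding additive_subgroup_def by auto
  have "(\<Prod>h\<in>H. [:- h, 1:]) = [:- 0, 1:] * (\<Prod>h\<in>H-{0}. [:- h, 1:])"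
    using prod.remove[OF fin z, of "\<lambda>h. [:- h, 1:]"] by simp
  hence "coeff (\<Prod>h\<in>H. [:- h, 1:]) 1 = coeff (\<Prod>h\<in>H-{0}. [:- h, 1:]) 0"
    by (simp add: mult_pCons_left)
  also have "\<dots> = poly (\<Prod>h\<in>H-{0}. [:- h, 1:]) 0" by (simp add: poly_0_coeff_0)
  also have "\<dots> = (\<Prod>h\<in>H-{0}. 0 - h)" by (simp add: poly_prod)
  also have "\<dots> = (\<Prod>h\<in>H-{0}. h)" using Msub[OF fin sg z] .
  finally show ?thesis .
qed

lemma sum_poly_H:
  fixes H :: "'a::field set" and f :: "'a poly"
  assumes fin: "finite H" and sg: "additive_subgroup H" and deg: "degree f < card H"
  shows "(\<Sum>h\<in>H. poly f h) = coeff (\<Prod>h\<in>H. [:- h, 1:]) 1 * coeff f (card H - 1)"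
proof -
  define N where "N = card H"
  define M where "M h = (\<Prod>h'\<in>H-{h}. [:- h', 1:])" for h
  define c0 where "c0 = (\<Prod>g\<in>H-{0}. g)"
  have z: "0 \<in> H" using sg unfolding additive_subgroup_def by auto
  have N0: "N > 0" using z fin card_gt_0_iff N_def by blast
  have degM: "degree (M h) = N - 1" if "h \<in> H" for h
    unfolding M_def using that fin
    by (subst degree_prod_sum_eq) (auto simp: N_def)
  have lcM: "coeff (M h) (N - 1) = 1" if "h \<in> H" for h
    using lead_coeff_prod[of "\<lambda>h'. [:- h', 1:]" "H-{h}"] degM[OF that] unfolding M_def by simp
  have polyM: "poly (M h) x = (if x = h then c0 else 0)" if "h \<in> H" "x \<in> H" for h x
  proof (cases "x = h")
    case True thus ?thesis using Msub[OF fin sg that(1)] unfolding M_def c0_def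
      by (simp add: poly_prod)
  next
    case False
    hence "x \<in> H - {h}" using that by auto
    thus ?thesis using False fin unfolding M_def
      by (auto simp: poly_prod intro!: prod_zero)
  qed
  define g where "g = (\<Sum>h\<in>H. smult (poly f h) (M h))"
  have "smult c0 f = g"
  proof (rule poly_eqI_degree[of H])
    fix x assume x: "x \<in> H"
    have "poly g x = (\<Sum>h\<in>H. poly f h * (if x = h then c0 else 0))"
      unfolding g_def poly_sum using polyM x by (auto intro!: sum.cong)
    also have "\<dots> = poly f x * c0" using fin x by (simp add: sum.delta[OF fin] if_distrib cong: if_cong)
    finally show "poly (smult c0 f) x = poly g x" by simp
  next
    show "degree (smult c0 f) < card H" using deg by (meson degree_smult_le le_less_trans)
    have "degree g \<le> N - 1" unfolding g_def
      by (rule degree_sum_le[OF fin]) (metis degM degree_smult_le)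
    thus "degree g < card H" using N0 N_def by linarith
  qed
  hence "c0 * coeff f (N - 1) = coeff g (N - 1)" by (metis coeff_smult)
  also have "\<dots> = (\<Sum>h\<in>H. poly f h)" unfolding g_def coeff_sum using lcM by simp
  finally show ?thesis using coeffL1[OF fin sg] c0_def N_def by simp
qed


lemma finite_exps: "finite (exps m d)"
proof -
  have "exps m d = {f. \<forall>x. (x \<in> {..<m} \<longrightarrow> f x \<in> {..d}) \<and> (x \<notin> {..<m} \<longrightarrow> f x = 0)}"
    unfolding exps_def by auto
  thus ?thesis using finite_set_of_finite_funs[of "{..<m}" "{..d}" 0] by (simp only: finite_lessThan finite_atMost simp_thms)
qed

lemma shifted_sum:
  fixes H :: "'a::field set"
  assumes fin: "finite H" and sg: "additive_subgroup H" and k: "k < card H"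
  shows "(\<Sum>h\<in>H. (h + w) ^ k) = (if k = card H - 1 then coeff (\<Prod>h\<in>H. [:- h, 1:]) 1 else 0)"
proof -
  have "(\<Sum>h\<in>H. (h + w) ^ k) = (\<Sum>h\<in>H. poly ([:w, 1:] ^ k) h)"
    by (simp add: poly_power add.commute)
  also have "\<dots> = coeff (\<Prod>h\<in>H. [:- h, 1:]) 1 * coeff ([:w, 1:] ^ k) (card H - 1)"
    by (rule sum_poly_H[OF fin sg]) (simp add: degree_linear_power k)
  also have "coeff ([:w, 1:] ^ k) (card H - 1) = (if k = card H - 1 then 1 else 0)"
  proof (cases "k = card H - 1")
    case True thus ?thesis by (simp add: coeff_linear_power)
  next
    case False hence "degree ([:w, 1:] ^ k) < card H - 1" using k by (simp add: degree_linear_power)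
    thus ?thesis using False by (simp add: coeff_eq_0)
  qed
  finally show ?thesis by simp
qed

theorem lemmaC5:
  fixes H :: "'a::field set" and m d :: nat
    and v :: "nat \<Rightarrow> 'a" and c :: "(nat \<Rightarrow> nat) \<Rightarrow> 'a"
  assumes "finite H" and "additive_subgroup H"
    and "m > 0" and "d > 0" and "d < card H"
    and "indiv_deg_le m d c"
  shows "(\<Sum>\<alpha>\<in>PiE {..<m} (\<lambda>_. H). mpoly_eval m d c (\<lambda>i. \<alpha> i + v i))
           = c (\<lambda>i. if i < m then card H - 1 else 0)
             * (coeff (\<Prod>h\<in>H. [:- h, 1:]) 1) ^ m
       \<and> ((\<forall>e. c e \<noteq> 0 \<longrightarrow> (\<Sum>i<m. e i) < m * (card H - 1)) \<longrightarrow>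
           (\<Sum>\<alpha>\<in>PiE {..<m} (\<lambda>_. H). mpoly_eval m d c (\<lambda>i. \<alpha> i + v i)) = 0)"
proof -
  note fin = assms(1) and sg = assms(2)
  define N where "N = card H"
  define a0 where "a0 = coeff (\<Prod>h\<in>H. [:- h, 1:]) 1"
  define E0 where "E0 = (\<lambda>i::nat. if i < m then N - 1 else 0)"
  have "(\<Sum>\<alpha>\<in>PiE {..<m} (\<lambda>_. H). mpoly_eval m d c (\<lambda>i. \<alpha> i + v i))
      = (\<Sum>\<alpha>\<in>PiE {..<m} (\<lambda>_. H). \<Sum>e\<in>exps m d. c e * (\<Prod>i<m. (\<alpha> i + v i) ^ e i))"
    unfolding mpoly_eval_def by simp
  also have "\<dots> = (\<Sum>e\<in>exps m d. c e * (\<Sum>\<alpha>\<in>PiE {..<m} (\<lambda>_. H). \<Prod>i<m. (\<alpha> i + v i) ^ e i))"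
    by (subst sum.swap) (simp add: sum_distrib_left)
  also have "\<dots> = (\<Sum>e\<in>exps m d. c e * (\<Prod>i<m. \<Sum>h\<in>H. (h + v i) ^ e i))"
    by (subst prod_sum_PiE) (use fin in auto)
  also have "\<dots> = (\<Sum>e\<in>exps m d. if e = E0 then c E0 * a0 ^ m else 0)"
  proof (rule sum.cong[OF refl])
    fix e assume e: "e \<in> exps m d"
    have ek: "e i < card H" if "i < m" for i using e that assms(5) unfolding exps_def by fastforce
    have "(\<Prod>i<m. \<Sum>h\<in>H. (h + v i) ^ e i) = (\<Prod>i<m. if e i = N - 1 then a0 else 0)"
      using shifted_sum[OF fin sg ek] unfolding a0_def N_def by simp
    also have "\<dots> = (if e = E0 then a0 ^ m else 0)"
    proof (cases "\<forall>i<m. e i = N - 1")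
      case True
      hence "e = E0" using e unfolding E0_def exps_def by (auto simp: fun_eq_iff)
      thus ?thesis using True by simp
    next
      case False
      then obtain i where "i < m" "e i \<noteq> N - 1" by auto
      moreover have "e \<noteq> E0" using calculation unfolding E0_def by auto
      ultimately show ?thesis by (auto intro!: prod_zero)
    qed
    finally show "c e * (\<Prod>i<m. \<Sum>h\<in>H. (h + v i) ^ e i) = (if e = E0 then c E0 * a0 ^ m else 0)"
      by simp
  qed
  also have "\<dots> = c E0 * a0 ^ m"
    using assms(6) unfolding indiv_deg_le_def by (auto simp: sum.delta' finite_exps)
  finally have main: "(\<Sum>\<alpha>\<in>PiE {..<m} (\<lambda>_. H). mpoly_eval m d c (\<lambda>i. \<alpha> i + v i)) = c E0 * a0 ^ m" .
  moreover have "(\<forall>e. c e \<noteq> 0 \<longrightarrow> (\<Sum>i<m. e i) < m * (card H - 1)) \<longrightarrow> c E0 = 0"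
    unfolding E0_def N_def by auto
  ultimately show ?thesis unfolding E0_def N_def a0_def by auto
qed

end
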